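(* Let $x_1,x_2,\ldots$ be a sequence of complex numbers and let $y_1,y_2,\ldots$ be its invert transform. Then for all integers $1\le k\le n$, \[k!\,B_{n,k}(y_1,2!\cdot y_2,3!\cdot y_3,\ldots)=\sum_{i=k}^n\binom{i-1}{k-1}\,i!\,B_{n,i}(x_1,2!\cdot x_2,3!\cdot x_3,\ldots).\]
   Context: The invert transform $(y_n)_{n\ge1}$ of $(x_n)_{n\ge1}$ is defined by $y_n=x_n+\sum_{i=1}^{n-1}x_i\,y_{n-i}$ for $n\ge1$, equivalently $1+\sum_{n\ge1}y_nt^n=\bigl(1-\sum_{n\ge1}x_nt^n\bigr)^{-1}$. The partial Bell polynomial is $B_{n,k}(z_1,z_2,\ldots)=\sum \frac{n!}{j_1!j_2!\cdots}\prod_{i\ge1}\left(\frac{z_i}{i!}\right)^{j_i}$, the sum over nonnegative integers $j_1,j_2,\ldots$ with $\sum_i j_i=k$ and $\sum_i i\,j_i=n$. *)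

theory Defs
  imports "HOL-Analysis.Analysis" "HOL-Library.FuncSet"
begin

text \<open>Sequences are indexed from 1; the value at index 0 is ignored.\<close>

definition invert_transform :: "(nat \<Rightarrow> complex) \<Rightarrow> (nat \<Rightarrow> complex) \<Rightarrow> bool" where
  "invert_transform x y \<longleftrightarrow>
     (\<forall>n\<ge>1. y n = x n + (\<Sum>i=1..n-1. x i * y (n - i)))"

text \<open>Partial Bell polynomial B_{n,k}(z_1,z_2,...): sum over j_1,j_2,... \<ge> 0 with
  sum j_i = k and sum i*j_i = n. Since i*j_i \<le> n, only j_1..j_n can be nonzero and
  each is at most n; such tuples are encoded as extensional functions on {1..n}.\<close>

definition bell_poly :: "nat \<Rightarrow> nat \<Rightarrow> (nat \<Rightarrow> complex) \<Rightarrow> complex" where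
  "bell_poly n k z =
     (\<Sum>j \<in> {j \<in> {1..n} \<rightarrow>\<^sub>E {0..n}. (\<Sum>i=1..n. j i) = k \<and> (\<Sum>i=1..n. i * j i) = n}.
        of_nat (fact n) / of_nat (\<Prod>i=1..n. fact (j i)) *
        (\<Prod>i=1..n. (z i / of_nat (fact i)) ^ (j i)))"

end

theory Submission imports Defs "HOL-Computational_Algebra.Formal_Power_Series" begin
unbundle no vec_syntax
unbundle fps_syntax

definition Jset :: "nat set \<Rightarrow> nat \<Rightarrow> (nat \<Rightarrow> nat) set" where
  "Jset A k = {j \<in> A \<rightarrow>\<^sub>E {0..k}. sum j A = k}"

lemma Jset_finite: "finite A \<Longrightarrow> finite (Jset A k)"
  unfolding Jset_def by (rule finite_subset[of _ "A \<rightarrow>\<^sub>E {0..k}"]) (auto intro: finite_PiE)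

lemma Jset_empty: "Jset {} k = (if k = 0 then {\<lambda>_. undefined} else {})"
  unfolding Jset_def by auto

lemma Jset_insert:
  assumes "b \<notin> A" "finite A"
  shows "Jset (insert b A) k = (\<lambda>(m,j'). j'(b:=m)) ` (SIGMA m:{0..k}. Jset A (k-m))"
proof (intro equalityI subsetI)
  fix j assume j: "j \<in> Jset (insert b A) k"
  define j' where "j' = j(b:=undefined)"
  have s: "sum j (insert b A) = k" and pe: "j \<in> insert b A \<rightarrow>\<^sub>E {0..k}" using j unfolding Jset_def by auto
  have s2: "j b + sum j A = k" using s assms by simp
  have s3: "sum j' A = sum j A" unfolding j'_def using assms(1) by (intro sum.cong) auto
  have "j' \<in> A \<rightarrow>\<^sub>E {0..k - j b}"
  proof -
    have "j' i \<le> k - j b" if "i \<in> A" for i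
    proof -
      have "j i \<le> sum j A" using that assms(2) by (intro member_le_sum) auto
      then show ?thesis unfolding j'_def using that assms(1) s2 by auto
    qed
    moreover have "j' i = undefined" if "i \<notin> A" for i
      using pe that unfolding j'_def by (auto simp: PiE_def extensional_def)
    ultimately show ?thesis by (auto simp: PiE_def extensional_def)
  qed
  then have "j' \<in> Jset A (k - j b)" unfolding Jset_def using s2 s3 by auto
  moreover have "j = j'(b := j b)" unfolding j'_def by auto
  moreover have "j b \<le> k" using s2 by auto
  ultimately show "j \<in> (\<lambda>(m,j'). j'(b:=m)) ` (SIGMA m:{0..k}. Jset A (k-m))"
    by (intro image_eqI[where x="(j b, j')"]) auto
next
  fix j assume "j \<in> (\<lambda>(m,j'). j'(b:=m)) ` (SIGMA m:{0..k}. Jset A (k-m))"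
  then obtain m j' where j: "j = j'(b:=m)" "m \<le> k" "j' \<in> Jset A (k-m)" by auto
  have pe: "j' \<in> A \<rightarrow>\<^sub>E {0..k-m}" and s: "sum j' A = k - m" using j(3) unfolding Jset_def by auto
  have "sum j A = sum j' A" unfolding j(1) using assms(1) by (intro sum.cong) auto
  then have "sum j (insert b A) = k" using assms s j by simp
  moreover have "j \<in> insert b A \<rightarrow>\<^sub>E {0..k}" using pe j(1,2) by (auto simp: PiE_def extensional_def Pi_def)
  ultimately show "j \<in> Jset (insert b A) k" unfolding Jset_def by auto
qed

lemma Jset_inj:
  assumes "b \<notin> A"
  shows "inj_on (\<lambda>(m,j'). j'(b:=m)) (SIGMA m:{0..k}. Jset A (k-m))"
proof (rule inj_onI, clarify)
  fix m1 j1 m2 j2 assume a: "m1 \<in> {0..k}" "j1 \<in> Jset A (k - m1)" "m2 \<in> {0..k}" "j2 \<in> Jset A (k - m2)"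
    and e: "j1(b := m1) = j2(b := m2)"
  have m: "m1 = m2" using fun_cong[OF e, of b] by simp
  have "j1 i = j2 i" for i
  proof (cases "i = b")
    case True
    then have "i \<notin> A" using assms by auto
    then show ?thesis using a unfolding Jset_def by (auto simp: PiE_def extensional_def)
  next
    case False then show ?thesis using fun_cong[OF e, of i] by simp
  qed
  then show "m1 = m2 \<and> j1 = j2" using m by auto
qed

lemma multinom:
  fixes a :: "nat \<Rightarrow> complex fps"
  assumes "finite A"
  shows "(\<Sum>i\<in>A. a i) ^ k = (\<Sum>j\<in>Jset A k. fps_const (of_nat (fact k) / of_nat (\<Prod>i\<in>A. fact (j i))) * (\<Prod>i\<in>A. a i ^ j i))"
  using assms
proof (induction A arbitrary: k rule: finite_induct)
  case empty
  then show ?case by (cases k) (auto simp: Jset_empty)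
next
  case (insert b A)
  let ?c = "\<lambda>k j. fps_const (of_nat (fact k) / of_nat (\<Prod>i\<in>A. fact (j i)) :: complex)"
  let ?g = "\<lambda>j. fps_const (of_nat (fact k) / of_nat (\<Prod>i\<in>insert b A. fact (j i))) * (\<Prod>i\<in>insert b A. a i ^ j i)"
  have "(\<Sum>j\<in>Jset (insert b A) k. ?g j) = (\<Sum>(m,j')\<in>(SIGMA m:{0..k}. Jset A (k-m)). ?g (j'(b:=m)))"
    unfolding Jset_insert[OF insert(2,1)] by (subst sum.reindex[OF Jset_inj[OF insert(2)]]) (simp add: case_prod_beta)
  also have "\<dots> = (\<Sum>m\<in>{0..k}. \<Sum>j'\<in>Jset A (k-m). ?g (j'(b:=m)))"
    by (rule sum.Sigma[symmetric]) (auto intro: Jset_finite insert)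
  also have "\<dots> = (\<Sum>m\<in>{0..k}. of_nat (k choose m) * a b ^ m * (\<Sum>j'\<in>Jset A (k-m). ?c (k-m) j' * (\<Prod>i\<in>A. a i ^ j' i)))"
  proof (intro sum.cong refl, simp only: sum_distrib_left)
    fix m assume m: "m \<in> {0..k}"
    show "(\<Sum>j'\<in>Jset A (k-m). ?g (j'(b:=m))) = (\<Sum>j'\<in>Jset A (k-m). of_nat (k choose m) * a b ^ m * (?c (k-m) j' * (\<Prod>i\<in>A. a i ^ j' i)))"
    proof (intro sum.cong refl)
      fix j' assume "j' \<in> Jset A (k-m)"
      have p1: "(\<Prod>i\<in>insert b A. fact ((j'(b:=m)) i)) = fact m * (\<Prod>i\<in>A. fact (j' i) :: nat)"
        using insert(1,2) by (subst prod.insert) (auto intro!: prod.cong)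
      have p2a: "(\<Prod>i\<in>A. a i ^ (j'(b:=m)) i) = (\<Prod>i\<in>A. a i ^ j' i)"
        by (rule prod.cong) (use insert(2) in auto)
      have p2: "(\<Prod>i\<in>insert b A. a i ^ (j'(b:=m)) i) = a b ^ m * (\<Prod>i\<in>A. a i ^ j' i)"
        using insert(1,2) p2a by (subst prod.insert) auto
      have P: "(of_nat (\<Prod>i\<in>A. fact (j' i)) :: complex) \<noteq> 0" using insert(1) by (simp add: prod_zero_iff)
      have cc: "(of_nat (fact k) / of_nat (fact m * (\<Prod>i\<in>A. fact (j' i))) :: complex)
          = of_nat (k choose m) * (of_nat (fact (k-m)) / of_nat (\<Prod>i\<in>A. fact (j' i)))"
        using m P by (simp add: binomial_fact field_simps)
      show "?g (j'(b:=m)) = of_nat (k choose m) * a b ^ m * (?c (k-m) j' * (\<Prod>i\<in>A. a i ^ j' i))"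
        unfolding p1 p2 cc by (simp flip: fps_const_mult fps_of_nat add: algebra_simps)
    qed
  qed
  also have "\<dots> = (\<Sum>m\<le>k. of_nat (k choose m) * a b ^ m * (\<Sum>i\<in>A. a i) ^ (k - m))"
    by (simp add: insert.IH atLeast0AtMost)
  also have "\<dots> = (a b + (\<Sum>i\<in>A. a i)) ^ k" by (rule binomial_ring[symmetric])
  finally show ?case using insert(1,2) by simp
qed

lemma fps_const_prod:
  "(\<Prod>i\<in>A. fps_const (f i)) = fps_const (\<Prod>i\<in>A. f i :: 'a::comm_ring_1)"
  by (induction A rule: infinite_finite_induct) (auto simp flip: fps_const_mult)

lemma pow_trunc:
  fixes A B :: "'a::comm_semiring_1 fps"
  assumes "\<forall>i\<le>n. A $ i = B $ i"
  shows "(A ^ k) $ n = (B ^ k) $ n"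
  using assms
proof (induction k arbitrary: n)
  case 0 then show ?case by simp
next
  case (Suc k)
  have "(A ^ Suc k) $ n = (\<Sum>i=0..n. A$i * (A^k)$(n-i))" by (simp add: fps_mult_nth)
  also have "\<dots> = (\<Sum>i=0..n. B$i * (B^k)$(n-i))"
    using Suc by (intro sum.cong refl) auto
  finally show ?case by (simp add: fps_mult_nth)
qed

lemma bell_fps:
  fixes w :: "nat \<Rightarrow> complex"
  shows "of_nat (fact k) * bell_poly n k (\<lambda>i. of_nat (fact i) * w i)
       = of_nat (fact n) * ((Abs_fps (\<lambda>i. if i = 0 then 0 else w i)) ^ k $ n)"
proof -
  define W where "W = Abs_fps (\<lambda>i. if i = 0 then 0 else w i)"
  define Wn where "Wn = (\<Sum>i\<in>{1..n}. fps_const (w i) * fps_X ^ i)"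
  have Wn_nth: "Wn $ m = (if m \<in> {1..n} then w m else 0)" for m
  proof -
    have "Wn $ m = (\<Sum>i\<in>{1..n}. if m = i then w m else 0)"
      unfolding Wn_def fps_sum_nth by (rule sum.cong) auto
    then show ?thesis by simp
  qed
  have Bset: "{j\<in>Jset {1..n} k. (\<Sum>i\<in>{1..n}. i * j i) = n} = {j \<in> {1..n} \<rightarrow>\<^sub>E {0..n}. (\<Sum>i=1..n. j i) = k \<and> (\<Sum>i=1..n. i * j i) = n}"
  proof (intro equalityI subsetI)
    fix j assume "j \<in> {j\<in>Jset {1..n} k. (\<Sum>i\<in>{1..n}. i * j i) = n}"
    then have a: "j \<in> {1..n} \<rightarrow>\<^sub>E {0..k}" "sum j {1..n} = k" "(\<Sum>i\<in>{1..n}. i * j i) = n"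
      unfolding Jset_def by auto
    have "j i \<le> n" if "i \<in> {1..n}" for i
    proof -
      have "j i \<le> i * j i" using that by simp
      also have "\<dots> \<le> (\<Sum>i\<in>{1..n}. i * j i)" using that by (intro member_le_sum) auto
      finally show ?thesis using a(3) by simp
    qed
    then show "j \<in> {j \<in> {1..n} \<rightarrow>\<^sub>E {0..n}. (\<Sum>i=1..n. j i) = k \<and> (\<Sum>i=1..n. i * j i) = n}"
      using a by (auto simp: PiE_def extensional_def Pi_def)
  next
    fix j assume "j \<in> {j \<in> {1..n} \<rightarrow>\<^sub>E {0..n}. (\<Sum>i=1..n. j i) = k \<and> (\<Sum>i=1..n. i * j i) = n}"
    then have a: "j \<in> {1..n} \<rightarrow>\<^sub>E {0..n}" "sum j {1..n} = k" "(\<Sum>i\<in>{1..n}. i * j i) = n"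
      by auto
    have "j i \<le> k" if "i \<in> {1..n}" for i
      using member_le_sum[of i "{1..n}" j] that a(2) by auto
    then show "j \<in> {j\<in>Jset {1..n} k. (\<Sum>i\<in>{1..n}. i * j i) = n}"
      using a unfolding Jset_def by (auto simp: PiE_def extensional_def Pi_def)
  qed
  have "W ^ k $ n = Wn ^ k $ n"
    by (rule pow_trunc) (auto simp: W_def Wn_nth)
  also have "Wn ^ k = (\<Sum>j\<in>Jset {1..n} k. fps_const (of_nat (fact k) / of_nat (\<Prod>i\<in>{1..n}. fact (j i))) * (\<Prod>i\<in>{1..n}. (fps_const (w i) * fps_X ^ i) ^ j i))"
    unfolding Wn_def by (rule multinom) simp
  also have "\<dots> = (\<Sum>j\<in>Jset {1..n} k. fps_const (of_nat (fact k) / of_nat (\<Prod>i\<in>{1..n}. fact (j i)) * (\<Prod>i\<in>{1..n}. w i ^ j i)) * fps_X ^ (\<Sum>i\<in>{1..n}. i * j i))"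
    by (intro sum.cong refl) (simp add: power_mult_distrib prod.distrib power_sum power_mult mult.commute mult.left_commute fps_const_prod)
  finally have "W ^ k $ n = (\<Sum>j\<in>Jset {1..n} k. fps_const (of_nat (fact k) / of_nat (\<Prod>i\<in>{1..n}. fact (j i)) * (\<Prod>i\<in>{1..n}. w i ^ j i)) * fps_X ^ (\<Sum>i\<in>{1..n}. i * j i)) $ n" .
  also have "\<dots> = (\<Sum>j\<in>Jset {1..n} k. if n = (\<Sum>i\<in>{1..n}. i * j i) then of_nat (fact k) / of_nat (\<Prod>i\<in>{1..n}. fact (j i)) * (\<Prod>i\<in>{1..n}. w i ^ j i) else 0)"
    unfolding fps_sum_nth fps_mult_left_const_nth fps_X_power_nth by (intro sum.cong refl) simp
  also have "\<dots> = (\<Sum>j\<in>{j\<in>Jset {1..n} k. (\<Sum>i\<in>{1..n}. i * j i) = n}. of_nat (fact k) / of_nat (\<Prod>i\<in>{1..n}. fact (j i)) * (\<Prod>i\<in>{1..n}. w i ^ j i))"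
  proof -
    have "(\<Sum>j\<in>Jset {1..n} k. if n = (\<Sum>i\<in>{1..n}. i * j i) then of_nat (fact k) / of_nat (\<Prod>i\<in>{1..n}. fact (j i)) * (\<Prod>i\<in>{1..n}. w i ^ j i) else 0)
       = (\<Sum>j\<in>Jset {1..n} k. if (\<Sum>i\<in>{1..n}. i * j i) = n then of_nat (fact k) / of_nat (\<Prod>i\<in>{1..n}. fact (j i)) * (\<Prod>i\<in>{1..n}. w i ^ j i) else (0::complex))"
      by (intro sum.cong refl) auto
    also have "\<dots> = (\<Sum>j\<in>{j\<in>Jset {1..n} k. (\<Sum>i\<in>{1..n}. i * j i) = n}. of_nat (fact k) / of_nat (\<Prod>i\<in>{1..n}. fact (j i)) * (\<Prod>i\<in>{1..n}. w i ^ j i))"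
      by (rule sum.inter_filter[symmetric]) (simp add: Jset_finite)
    finally show ?thesis .
  qed
  also have "\<dots> = (\<Sum>j\<in>{j \<in> {1..n} \<rightarrow>\<^sub>E {0..n}. (\<Sum>i=1..n. j i) = k \<and> (\<Sum>i=1..n. i * j i) = n}. of_nat (fact k) / of_nat (\<Prod>i\<in>{1..n}. fact (j i)) * (\<Prod>i\<in>{1..n}. w i ^ j i))"
    by (simp only: Bset)
  finally have e: "W ^ k $ n = \<dots>" .
  show ?thesis
    unfolding W_def[symmetric] e bell_poly_def sum_distrib_left
  proof (intro sum.cong refl)
    fix j
    have "(\<Prod>i=1..n. (of_nat (fact i) * w i / of_nat (fact i)) ^ j i) = (\<Prod>i=1..n. w i ^ j i)"
      by (intro prod.cong refl) simp
    then show "of_nat (fact k) * (of_nat (fact n) / of_nat (\<Prod>i=1..n. fact (j i)) * (\<Prod>i=1..n. (of_nat (fact i) * w i / of_nat (fact i)) ^ j i))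
      = of_nat (fact n) * (of_nat (fact k) / of_nat (\<Prod>i=1..n. fact (j i)) * (\<Prod>i=1..n. w i ^ j i))"
      by simp
  qed
qed

definition hh :: "complex fps" where "hh = Abs_fps (\<lambda>i. if i = 0 then 0 else 1)"

lemma hh_rec: "hh = fps_X + fps_X * hh"
  by (auto simp: fps_eq_iff hh_def)

lemma hh_pow: "(hh ^ Suc k) $ i = (if i = 0 then 0 else of_nat ((i - 1) choose k))"
proof (induction k arbitrary: i)
  case 0 then show ?case by (simp add: hh_def)
next
  case (Suc k)
  have rec: "(hh ^ Suc (Suc k)) $ i = (if i = 0 then 0 else (hh ^ Suc k) $ (i - 1) + (hh ^ Suc (Suc k)) $ (i - 1))" for i
  proof -
    have "hh ^ Suc (Suc k) = (fps_X + fps_X * hh) * hh ^ Suc k" using hh_rec by (metis power_Suc)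
    also have "\<dots> = fps_X * hh ^ Suc k + fps_X * hh ^ Suc (Suc k)" by (simp add: algebra_simps)
    finally have e: "hh ^ Suc (Suc k) = fps_X * hh ^ Suc k + fps_X * hh ^ Suc (Suc k)" .
    show ?thesis by (subst e) (simp only: fps_add_nth fps_X_mult_nth, simp)
  qed
  note IHk = Suc.IH
  show ?case
  proof (induction i)
    case 0 then show ?case by (simp add: rec[of 0] hh_def)
  next
    case (Suc i)
    show ?case
    proof (cases i)
      case 0 then show ?thesis using rec[of "Suc 0"] rec[of 0] IHk[of 0] by (simp del: power_Suc)
    next
      case (Suc p)
      then show ?thesis using Suc.IH rec[of "Suc i"] IHk[of i] \<open>i = Suc p\<close> by (simp del: power_Suc)
    qed
  qed
qed

lemma hh_pow': "1 \<le> k \<Longrightarrow> (hh ^ k) $ i = (if i = 0 then 0 else of_nat ((i - 1) choose (k - 1)))"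
  using hh_pow[of "k - 1" i] by simp

lemma uniq:
  fixes X D :: "complex fps"
  assumes "X $ 0 = 0" "D = X * D"
  shows "D = 0"
proof -
  have "(1 - X) * D = 0" using assms(2) by (simp add: algebra_simps)
  moreover have "1 - X \<noteq> 0"
  proof
    assume "1 - X = 0"
    then have "(1 - X) $ 0 = 0" by simp
    then show False using assms(1) by simp
  qed
  ultimately show ?thesis by simp
qed

theorem mainTheorem7:
  fixes x y :: "nat \<Rightarrow> complex" and n k :: nat
  assumes "invert_transform x y"
    and "1 \<le> k" and "k \<le> n"
  shows "of_nat (fact k) * bell_poly n k (\<lambda>i. of_nat (fact i) * y i)
       = (\<Sum>i=k..n. of_nat ((i - 1) choose (k - 1)) * of_nat (fact i)
                     * bell_poly n i (\<lambda>m. of_nat (fact m) * x m))"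
proof -
  define X where "X = Abs_fps (\<lambda>i. if i = 0 then 0 else x i)"
  define Y where "Y = Abs_fps (\<lambda>i. if i = 0 then 0 else y i)"
  have X0: "X $ 0 = 0" by (simp add: X_def)
  have YX: "Y = X + X * Y"
  proof (rule fps_ext)
    fix m
    show "Y $ m = (X + X * Y) $ m"
    proof (cases "m = 0")
      case True then show ?thesis by (simp add: X_def Y_def)
    next
      case False
      have "(X * Y) $ m = (\<Sum>i=0..m. X$i * Y$(m-i))" by (rule fps_mult_nth)
      also have "\<dots> = (\<Sum>i=1..m-1. X$i * Y$(m-i))"
        by (rule sum.mono_neutral_right) (auto simp: X_def Y_def)
      also have "\<dots> = (\<Sum>i=1..m-1. x i * y (m-i))"
        by (intro sum.cong refl) (auto simp: X_def Y_def)
      finally show ?thesis using False assms(1) unfolding invert_transform_def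
        by (simp add: X_def Y_def)
    qed
  qed
  have hX: "hh oo X = X + X * (hh oo X)"
  proof -
    have "hh oo X = (fps_X + fps_X * hh) oo X" using hh_rec by simp
    also have "\<dots> = X + X * (hh oo X)"
      using X0 by (simp add: fps_compose_add_distrib fps_compose_mult_distrib)
    finally show ?thesis .
  qed
  have "Y - (hh oo X) = (X + X * Y) - (X + X * (hh oo X))"
    by (rule arg_cong2[where f="(-)"]) (fact YX, fact hX)
  also have "\<dots> = X * (Y - (hh oo X))" by (simp add: algebra_simps)
  finally have "Y - (hh oo X) = X * (Y - (hh oo X))" .
  then have "Y - (hh oo X) = 0" by (rule uniq[OF X0])
  then have YhX: "Y = hh oo X" by simp
  have "Y ^ k $ n = (hh ^ k oo X) $ n" unfolding YhX using X0 by (simp add: fps_compose_power)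
  also have "\<dots> = (\<Sum>i=0..n. (hh^k)$i * (X^i)$n)" by (rule fps_compose_nth)
  also have "\<dots> = (\<Sum>i=k..n. (hh^k)$i * (X^i)$n)"
    using assms(2) by (intro sum.mono_neutral_right) (auto simp: hh_pow')
  also have "\<dots> = (\<Sum>i=k..n. of_nat ((i - 1) choose (k - 1)) * (X^i)$n)"
    using assms(2) by (intro sum.cong refl) (auto simp: hh_pow')
  finally have key: "Y ^ k $ n = \<dots>" .
  have "of_nat (fact k) * bell_poly n k (\<lambda>i. of_nat (fact i) * y i) = of_nat (fact n) * (Y ^ k $ n)"
    unfolding Y_def by (rule bell_fps)
  also have "\<dots> = (\<Sum>i=k..n. of_nat ((i - 1) choose (k - 1)) * (of_nat (fact n) * (X^i)$n))"
    unfolding key sum_distrib_left by (simp add: algebra_simps)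
  also have "\<dots> = (\<Sum>i=k..n. of_nat ((i - 1) choose (k - 1)) * of_nat (fact i)
                     * bell_poly n i (\<lambda>m. of_nat (fact m) * x m))"
    unfolding X_def by (intro sum.cong refl) (simp only: bell_fps[symmetric] mult.assoc)
  finally show ?thesis .
qed

end
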